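(* Let $G=(V,w,m)$ be a locally finite weighted graph having the hypercube shell structure $HSS(N,W,x_0)$ for some $N,W>0$ and $x_0\in V$. Then for every integer $n\ge0$, $$m(S_n(x_0))=m(x_0)\binom Nn,$$ where $m(A)=\sum_{x\in A}m(x)$ and $\binom Nn=\frac{N(N-1)\cdots(N-n+1)}{n!}$.
   Context: A weighted graph is $G=(V,w,m)$ with $V$ countable, $w:V\times V\to[0,\infty)$ symmetric with $w(x,x)=0$, $m:V\to(0,\infty)$; $x\sim y$ iff $w(x,y)>0$. $\operatorname{Deg}(x)=\frac1{m(x)}\sum_yw(x,y)$. $d$ is the combinatorial distance, $S_n(x)=\{y:d(x,y)=n\}$. $d_-^{x_0}(z)=\sum_{y\sim z,\ d(y,x_0)<d(z,x_0)}\frac{w(y,z)}{m(z)}$. $HSS(N,W,x_0)$: (i) $\operatorname{Deg}(x)=NW$ for all $x\in V$; (ii) $G$ is bipartite; (iii) $d_-^{x_0}(x)=W\,d(x,x_0)$ for all $x\in V$. *)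

theory Defs
  imports Complex_Main "HOL-Library.Countable_Set" "HOL-Library.Extended_Nat"
begin

definition weighted_graph :: "'a set \<Rightarrow> ('a \<Rightarrow> 'a \<Rightarrow> real) \<Rightarrow> ('a \<Rightarrow> real) \<Rightarrow> bool" where
  "weighted_graph V w m \<longleftrightarrow> countable V
     \<and> (\<forall>x y. w x y = w y x) \<and> (\<forall>x y. 0 \<le> w x y) \<and> (\<forall>x. w x x = 0)
     \<and> (\<forall>x y. w x y \<noteq> 0 \<longrightarrow> x \<in> V \<and> y \<in> V)
     \<and> (\<forall>x\<in>V. 0 < m x)"

definition adj :: "'a set \<Rightarrow> ('a \<Rightarrow> 'a \<Rightarrow> real) \<Rightarrow> 'a \<Rightarrow> 'a \<Rightarrow> bool" where
  "adj V w x y \<longleftrightarrow> x \<in> V \<and> y \<in> V \<and> 0 < w x y"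

definition nbrs :: "'a set \<Rightarrow> ('a \<Rightarrow> 'a \<Rightarrow> real) \<Rightarrow> 'a \<Rightarrow> 'a set" where
  "nbrs V w x = {y. adj V w x y}"

definition locally_finite :: "'a set \<Rightarrow> ('a \<Rightarrow> 'a \<Rightarrow> real) \<Rightarrow> bool" where
  "locally_finite V w \<longleftrightarrow> (\<forall>x\<in>V. finite (nbrs V w x))"

definition gdist :: "'a set \<Rightarrow> ('a \<Rightarrow> 'a \<Rightarrow> real) \<Rightarrow> 'a \<Rightarrow> 'a \<Rightarrow> enat" where
  "gdist V w x y = (if \<exists>n. (adj V w ^^ n) x y
                    then enat (LEAST n. (adj V w ^^ n) x y) else \<infinity>)"

definition sphere :: "'a set \<Rightarrow> ('a \<Rightarrow> 'a \<Rightarrow> real) \<Rightarrow> 'a \<Rightarrow> nat \<Rightarrow> 'a set" where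
  "sphere V w x n = {y\<in>V. gdist V w x y = enat n}"

definition Deg :: "'a set \<Rightarrow> ('a \<Rightarrow> 'a \<Rightarrow> real) \<Rightarrow> ('a \<Rightarrow> real) \<Rightarrow> 'a \<Rightarrow> real" where
  "Deg V w m x = (\<Sum>y\<in>nbrs V w x. w x y) / m x"

definition dminus :: "'a set \<Rightarrow> ('a \<Rightarrow> 'a \<Rightarrow> real) \<Rightarrow> ('a \<Rightarrow> real) \<Rightarrow> 'a \<Rightarrow> 'a \<Rightarrow> real" where
  "dminus V w m x0 z =
     (\<Sum>y\<in>{y\<in>nbrs V w z. gdist V w y x0 < gdist V w z x0}. w y z / m z)"

definition bipartite :: "'a set \<Rightarrow> ('a \<Rightarrow> 'a \<Rightarrow> real) \<Rightarrow> bool" where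
  "bipartite V w \<longleftrightarrow> (\<exists>A. \<forall>x y. adj V w x y \<longrightarrow> (x \<in> A \<longleftrightarrow> y \<notin> A))"

text \<open>HSS(N,W,x0). Condition (iii) is imposed at vertices at finite distance from x0.\<close>
definition HSS :: "'a set \<Rightarrow> ('a \<Rightarrow> 'a \<Rightarrow> real) \<Rightarrow> ('a \<Rightarrow> real) \<Rightarrow> real \<Rightarrow> real \<Rightarrow> 'a \<Rightarrow> bool" where
  "HSS V w m N W x0 \<longleftrightarrow> x0 \<in> V
     \<and> (\<forall>x\<in>V. Deg V w m x = N * W)
     \<and> bipartite V w
     \<and> (\<forall>x\<in>V. \<forall>k. gdist V w x x0 = enat k \<longrightarrow> dminus V w m x0 x = W * real k)"

end

theory Submission
  imports Defs
begin

lemma relpow_sym: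
  assumes "\<And>x y. P x y \<Longrightarrow> P y x"
  shows "(P ^^ n) x y \<Longrightarrow> (P ^^ n) y x"
proof (induction n arbitrary: x y)
  case 0 then show ?case by simp
next
  case (Suc n)
  from Suc.prems obtain u where "(P ^^ n) x u" "P u y" by (rule relpowp_Suc_E)
  then have "P y u" "(P ^^ n) u x" using assms Suc.IH by auto
  then show ?case by (rule relpowp_Suc_I2)
qed

lemma relpow_parity:
  assumes "\<And>x y. P x y \<Longrightarrow> (x \<in> A \<longleftrightarrow> y \<notin> A)"
  shows "(P ^^ k) x y \<Longrightarrow> ((x \<in> A \<longleftrightarrow> y \<in> A) \<longleftrightarrow> even k)"
proof (induction k arbitrary: y)
  case 0 then show ?case by simp
next
  case (Suc k)
  from Suc.prems obtain u where "(P ^^ k) x u" "P u y" by (rule relpowp_Suc_E)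
  then show ?case using Suc.IH[of u] assms[of u y] by auto
qed

context
  fixes V :: "'a set" and w :: "'a \<Rightarrow> 'a \<Rightarrow> real" and m :: "'a \<Rightarrow> real"
    and N W :: real and x0 :: 'a
  assumes wg: "weighted_graph V w m" and lf: "locally_finite V w"
    and Npos: "N > 0" and Wpos: "W > 0" and hss: "HSS V w m N W x0"
begin

lemma adj_sym: "adj V w x y \<Longrightarrow> adj V w y x"
  using wg unfolding adj_def weighted_graph_def by auto

lemma gdist_sym: "gdist V w x y = gdist V w y x"
proof -
  have "(adj V w ^^ n) x y \<longleftrightarrow> (adj V w ^^ n) y x" for n
    using relpow_sym[of "adj V w", OF adj_sym] by blast
  then show ?thesis unfolding gdist_def by simp
qed

lemma gd_le: "(adj V w ^^ k) x0 y \<Longrightarrow> gdist V w x0 y \<le> enat k"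
  unfolding gdist_def by (auto intro: Least_le)

lemma gd_eq: "gdist V w x0 y = enat k \<Longrightarrow> (adj V w ^^ k) x0 y"
  unfolding gdist_def by (auto split: if_splits intro: LeastI)

lemma parity:
  obtains A where "\<And>k y. (adj V w ^^ k) x0 y \<Longrightarrow> ((x0 \<in> A \<longleftrightarrow> y \<in> A) \<longleftrightarrow> even k)"
    and "\<And>x y. adj V w x y \<Longrightarrow> (x \<in> A \<longleftrightarrow> y \<notin> A)"
proof -
  from hss obtain A where A: "\<And>x y. adj V w x y \<Longrightarrow> (x \<in> A \<longleftrightarrow> y \<notin> A)"
    unfolding HSS_def bipartite_def by blast
  show ?thesis by (rule that[OF relpow_parity[of "adj V w" A, OF A] A]) (use A in auto)
qed

lemma step:
  assumes "adj V w y z" "gdist V w x0 y = enat k"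
  shows "\<exists>j. gdist V w x0 z = enat j \<and> (j = k + 1 \<or> j + 1 = k)"
proof -
  have ky: "(adj V w ^^ k) x0 y" using gd_eq assms(2) .
  then have "(adj V w ^^ Suc k) x0 z" using assms(1) by (rule relpowp_Suc_I)
  then have "gdist V w x0 z \<le> enat (Suc k)" by (rule gd_le)
  then obtain j where j: "gdist V w x0 z = enat j" "j \<le> Suc k"
    by (cases "gdist V w x0 z") auto
  have jz: "(adj V w ^^ j) x0 z" using gd_eq j(1) .
  then have "(adj V w ^^ Suc j) x0 y" using adj_sym[OF assms(1)] by (rule relpowp_Suc_I)
  then have "gdist V w x0 y \<le> enat (Suc j)" by (rule gd_le)
  then have kj: "k \<le> Suc j" using assms(2) by simp
  obtain A where P: "\<And>k y. (adj V w ^^ k) x0 y \<Longrightarrow> ((x0 \<in> A \<longleftrightarrow> y \<in> A) \<longleftrightarrow> even k)"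
    and B: "\<And>x y. adj V w x y \<Longrightarrow> (x \<in> A \<longleftrightarrow> y \<notin> A)" using parity by metis
  have "even k \<noteq> even j" using P[OF ky] P[OF jz] B[OF assms(1)] by blast
  then have "j \<noteq> k" by auto
  then have "j = k + 1 \<or> j + 1 = k" using j(2) kj by arith
  then show ?thesis using j(1) by blast
qed

lemma pred:
  assumes "gdist V w x0 z = enat (Suc n)"
  shows "\<exists>y. adj V w y z \<and> gdist V w x0 y = enat n"
proof -
  from gd_eq[OF assms] obtain y where y: "(adj V w ^^ n) x0 y" "adj V w y z"
    by (rule relpowp_Suc_E)
  from gd_le[OF y(1)] obtain j where j: "gdist V w x0 y = enat j" "j \<le> n"
    by (cases "gdist V w x0 y") auto
  from step[OF y(2) j(1)] assms have "Suc n = j + 1 \<or> Suc n + 1 = j" by auto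
  then have "j = n" using j(2) by arith
  then show ?thesis using y j by blast
qed

lemma x0V: "x0 \<in> V" using hss unfolding HSS_def by auto

lemma sphere0: "sphere V w x0 0 = {x0}"
proof -
  have "gdist V w x0 y = enat 0 \<longleftrightarrow> y = x0" for y
  proof
    assume "gdist V w x0 y = enat 0"
    from gd_eq[OF this] show "y = x0" by simp
  next
    assume "y = x0"
    then show "gdist V w x0 y = enat 0" using gd_le[of 0 x0] by (simp add: enat_0)
  qed
  then show ?thesis unfolding sphere_def using x0V by auto
qed

lemma sphere_finite: "finite (sphere V w x0 n)"
proof (induction n)
  case 0 then show ?case by (simp add: sphere0)
next
  case (Suc n)
  have "sphere V w x0 (Suc n) \<subseteq> (\<Union>x\<in>sphere V w x0 n. nbrs V w x)"
  proof
    fix z assume "z \<in> sphere V w x0 (Suc n)"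
    then have "gdist V w x0 z = enat (Suc n)" unfolding sphere_def by auto
    from pred[OF this] obtain y where "adj V w y z" "gdist V w x0 y = enat n" by blast
    then show "z \<in> (\<Union>x\<in>sphere V w x0 n. nbrs V w x)"
      unfolding sphere_def nbrs_def adj_def by auto
  qed
  moreover have "finite (\<Union>x\<in>sphere V w x0 n. nbrs V w x)"
    using Suc.IH lf unfolding locally_finite_def sphere_def by auto
  ultimately show ?case by (rule finite_subset)
qed

lemma w_zero: "x \<in> V \<Longrightarrow> y \<in> V \<Longrightarrow> \<not> adj V w x y \<Longrightarrow> w x y = 0"
  using wg unfolding adj_def weighted_graph_def by (metis less_eq_real_def)

lemma forward:
  assumes x: "x \<in> sphere V w x0 n"
  shows "(\<Sum>y\<in>sphere V w x0 (Suc n). w x y) = (N - real n) * W * m x"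
proof -
  have xV: "x \<in> V" and dx: "gdist V w x0 x = enat n" using x unfolding sphere_def by auto
  have mx: "m x > 0" using wg xV unfolding weighted_graph_def by auto
  define B where "B = {y\<in>nbrs V w x. gdist V w y x0 < gdist V w x x0}"
  define F where "F = nbrs V w x \<inter> sphere V w x0 (Suc n)"
  have fin: "finite (nbrs V w x)" using lf xV unfolding locally_finite_def by auto
  have split: "nbrs V w x = B \<union> F" "B \<inter> F = {}"
  proof -
    have "y \<in> B \<or> y \<in> F" if "y \<in> nbrs V w x" for y
    proof -
      have a: "adj V w x y" using that unfolding nbrs_def by auto
      from step[OF a dx] obtain j where j: "gdist V w x0 y = enat j" "j = n+1 \<or> j+1 = n" by blast
      show ?thesis using j that a unfolding B_def F_def sphere_def adj_def
        by (auto simp: gdist_sym[of y x0] gdist_sym[of x x0] dx)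
    qed
    moreover have "B \<union> F \<subseteq> nbrs V w x" unfolding B_def F_def by auto
    ultimately show "nbrs V w x = B \<union> F" by blast
    show "B \<inter> F = {}" unfolding B_def F_def sphere_def
      by (auto simp: gdist_sym[of _ x0] gdist_sym[of x x0] dx)
  qed
  have deg: "(\<Sum>y\<in>nbrs V w x. w x y) = N * W * m x"
    using hss xV mx unfolding HSS_def Deg_def by (auto simp: field_simps)
  have dm: "(\<Sum>y\<in>B. w y x / m x) = W * real n"
    using hss xV gdist_sym[of x x0] dx unfolding HSS_def dminus_def B_def by auto
  have "(\<Sum>y\<in>B. w y x / m x) = (\<Sum>y\<in>B. w x y) / m x"
    by (simp add: sum_divide_distrib wg[unfolded weighted_graph_def] )
  with dm mx have bsum: "(\<Sum>y\<in>B. w x y) = W * real n * m x" by (auto simp: field_simps)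
  have "(\<Sum>y\<in>nbrs V w x. w x y) = (\<Sum>y\<in>B. w x y) + (\<Sum>y\<in>F. w x y)"
    using split fin by (simp add: sum.union_disjoint)
  with deg bsum have fsum: "(\<Sum>y\<in>F. w x y) = (N - real n) * W * m x"
    by (simp add: algebra_simps)
  have "(\<Sum>y\<in>sphere V w x0 (Suc n). w x y) = (\<Sum>y\<in>F. w x y)"
    unfolding F_def
    by (rule sum.mono_neutral_right[OF sphere_finite])
       (auto simp: nbrs_def sphere_def xV intro!: w_zero)
  with fsum show ?thesis by simp
qed

lemma backward:
  assumes z: "z \<in> sphere V w x0 (Suc n)"
  shows "(\<Sum>y\<in>sphere V w x0 n. w y z) = real (Suc n) * W * m z"
proof -
  have zV: "z \<in> V" and dz: "gdist V w x0 z = enat (Suc n)" using z unfolding sphere_def by auto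
  have mz: "m z > 0" using wg zV unfolding weighted_graph_def by auto
  define B where "B = {y\<in>nbrs V w z. gdist V w y x0 < gdist V w z x0}"
  have BF: "B = nbrs V w z \<inter> sphere V w x0 n"
  proof -
    have "y \<in> B \<longleftrightarrow> y \<in> nbrs V w z \<inter> sphere V w x0 n" if "y \<in> nbrs V w z" for y
    proof -
      have a: "adj V w z y" using that unfolding nbrs_def by auto
      from step[OF a dz] obtain j where j: "gdist V w x0 y = enat j" "j = Suc n+1 \<or> j+1 = Suc n" by blast
      show ?thesis using j that a unfolding B_def sphere_def adj_def
        by (auto simp: gdist_sym[of y x0] gdist_sym[of z x0] dz)
    qed
    then show ?thesis unfolding B_def by blast
  qed
  have dm: "(\<Sum>y\<in>B. w y z / m z) = W * real (Suc n)"
    using hss zV gdist_sym[of z x0] dz unfolding HSS_def dminus_def B_def by auto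
  have "(\<Sum>y\<in>B. w y z / m z) = (\<Sum>y\<in>B. w y z) / m z"
    by (simp add: sum_divide_distrib)
  with dm mz have bsum: "(\<Sum>y\<in>B. w y z) = real (Suc n) * W * m z" by (auto simp: field_simps)
  have "(\<Sum>y\<in>sphere V w x0 n. w y z) = (\<Sum>y\<in>B. w y z)"
    unfolding BF
    by (rule sum.mono_neutral_right[OF sphere_finite])
       (auto simp: nbrs_def sphere_def zV intro!: w_zero dest: adj_sym)
  with bsum show ?thesis by simp
qed

lemma recur:
  "real (Suc n) * (\<Sum>x\<in>sphere V w x0 (Suc n). m x) = (N - real n) * (\<Sum>x\<in>sphere V w x0 n. m x)"
proof -
  have "(\<Sum>x\<in>sphere V w x0 n. \<Sum>y\<in>sphere V w x0 (Suc n). w x y)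
      = (\<Sum>y\<in>sphere V w x0 (Suc n). \<Sum>x\<in>sphere V w x0 n. w x y)"
    by (rule sum.swap)
  also have "\<dots> = (\<Sum>y\<in>sphere V w x0 (Suc n). real (Suc n) * W * m y)"
    by (rule sum.cong) (auto simp: backward)
  also have "(\<Sum>x\<in>sphere V w x0 n. \<Sum>y\<in>sphere V w x0 (Suc n). w x y)
      = (\<Sum>x\<in>sphere V w x0 n. (N - real n) * W * m x)"
    by (rule sum.cong) (auto simp: forward)
  finally have "W * ((N - real n) * (\<Sum>x\<in>sphere V w x0 n. m x))
     = W * (real (Suc n) * (\<Sum>x\<in>sphere V w x0 (Suc n). m x))"
    by (simp add: sum_distrib_left algebra_simps)
  then show ?thesis using Wpos by simp
qed

lemma main: "(\<Sum>x\<in>sphere V w x0 n. m x) = m x0 * (N gchoose n)"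
proof (induction n)
  case 0 then show ?case by (simp add: sphere0)
next
  case (Suc n)
  have "real (Suc n) * (\<Sum>x\<in>sphere V w x0 (Suc n). m x) = real (Suc n) * (m x0 * (N gchoose Suc n))"
    using recur[of n] Suc.IH gbinomial_mult_1[of N n] by (simp add: algebra_simps)
  then show ?case by simp
qed

end

theorem proposition2:
  fixes V :: "'a set" and w :: "'a \<Rightarrow> 'a \<Rightarrow> real" and m :: "'a \<Rightarrow> real"
    and N W :: real and x0 :: 'a and n :: nat
  assumes "weighted_graph V w m" and "locally_finite V w"
    and "N > 0" and "W > 0" and "HSS V w m N W x0"
  shows "(\<Sum>x\<in>sphere V w x0 n. m x) = m x0 * (N gchoose n)"
  using main[OF assms] .

end
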